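(* Let $0<\eta<1/20$ and $K\ge1/\eta$. Let $G$ be a $(1-\eta)$-complete graph on a vertex set $V$ with $|V|=K$, let $W\subseteq V$ satisfy $|W|,|V\setminus W|\ge 4\eta^{1/2}K$, and let $G_W$ be obtained from $G$ by deleting all edges with both endpoints in $W$. Suppose each edge of $G_W$ is coloured red or blue, and let $F$ be a largest monochromatic connected component of $G_W$. Define $W_r=\{w\in W: w \text{ is joined by red edges to all but at most } 3\eta^{1/2}K \text{ vertices of } V\setminus W\}$ and $W_b=\{w\in W: w \text{ is joined by blue edges to all but at most } 3\eta^{1/2}K \text{ vertices of } V\setminus W\}$. Then $|F|\ge(1-2\eta^{1/2})K$ or both $W_r$ and $W_b$ are nonempty.
   Context: A graph on $K$ vertices is $(1-\eta)$-complete if its minimum degree is at least $(1-\eta)(K-1)$. A monochromatic component is a connected component of the subgraph formed by the red edges or of the subgraph formed by the blue edges. *)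

theory Defs
  imports Complex_Main
begin

definition simple_graph :: "'a set \<Rightarrow> 'a set set \<Rightarrow> bool" where
  "simple_graph V E \<longleftrightarrow> finite V \<and> (\<forall>e\<in>E. e \<subseteq> V \<and> card e = 2)"

definition degree :: "'a set \<Rightarrow> 'a set set \<Rightarrow> 'a \<Rightarrow> nat" where
  "degree V E v = card {u \<in> V. {v, u} \<in> E}"

definition almost_complete :: "real \<Rightarrow> 'a set \<Rightarrow> 'a set set \<Rightarrow> bool" where
  "almost_complete eta V E \<longleftrightarrow>
     (\<forall>v\<in>V. real (degree V E v) \<ge> (1 - eta) * (real (card V) - 1))"

definition component_of :: "'a set \<Rightarrow> 'a set set \<Rightarrow> 'a \<Rightarrow> 'a set" where
  "component_of V C v = {u \<in> V. (\<lambda>x y. {x, y} \<in> C)\<^sup>*\<^sup>* v u}"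

definition is_component :: "'a set \<Rightarrow> 'a set set \<Rightarrow> 'a set \<Rightarrow> bool" where
  "is_component V C S \<longleftrightarrow> (\<exists>v\<in>V. S = component_of V C v)"

definition mono_component :: "'a set \<Rightarrow> 'a set set \<Rightarrow> 'a set set \<Rightarrow> 'a set \<Rightarrow> bool" where
  "mono_component V R B S \<longleftrightarrow> is_component V R S \<or> is_component V B S"

end

theory Submission
  imports Defs
begin

lemma conn_sym:
  assumes "(\<lambda>x y. {x,y} \<in> C)\<^sup>*\<^sup>* a b"
  shows "(\<lambda>x y. {x,y} \<in> C)\<^sup>*\<^sup>* b a"
  using assms
proof (induction rule: rtranclp_induct)
  case base then show ?case by simp
next
  case (step y z)
  have "{z,y} \<in> C" using step(2) by (simp add: insert_commute)
  then show ?case using step(3) by (rule converse_rtranclp_into_rtranclp)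
qed

lemma conn_edge: "{x,y} \<in> C \<Longrightarrow> (\<lambda>x y. {x,y} \<in> C)\<^sup>*\<^sup>* x y"
  by (rule r_into_rtranclp) simp

lemma exists_nbr:
  assumes nonnbr: "real (card {u\<in>S. {v,u} \<notin> E}) \<le> d"
    and "real (card S) > d"
  shows "\<exists>u\<in>S. {v,u} \<in> E"
proof (rule ccontr)
  assume "\<not> ?thesis"
  then have "{u\<in>S. {v,u} \<notin> E} = S" by auto
  then show False using assms by simp
qed

lemma common_nbr:
  assumes "finite S"
    and n1: "real (card {u\<in>S. {v1,u} \<notin> E}) \<le> d"
    and n2: "real (card {u\<in>S. {v2,u} \<notin> E}) \<le> d"
    and "real (card S) > 2 * d"
  shows "\<exists>u\<in>S. {v1,u} \<in> E \<and> {v2,u} \<in> E"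
proof (rule ccontr)
  assume "\<not> ?thesis"
  then have "S \<subseteq> {u\<in>S. {v1,u} \<notin> E} \<union> {u\<in>S. {v2,u} \<notin> E}" by auto
  then have "card S \<le> card ({u\<in>S. {v1,u} \<notin> E} \<union> {u\<in>S. {v2,u} \<notin> E})"
    using assms(1) by (intro card_mono) auto
  also have "\<dots> \<le> card {u\<in>S. {v1,u} \<notin> E} + card {u\<in>S. {v2,u} \<notin> E}"
    by (rule card_Un_le)
  finally have "real (card S) \<le> real (card {u\<in>S. {v1,u} \<notin> E}) + real (card {u\<in>S. {v2,u} \<notin> E})"
    by linarith
  then show False using assms by linarith
qed

lemma main:
  fixes V W :: "'a set" and E R B :: "'a set set" and d :: real
  assumes fin: "finite V"
    and nonnbr: "\<And>v S. v \<in> V \<Longrightarrow> S \<subseteq> V \<Longrightarrow> v \<notin> S \<Longrightarrow> real (card {u\<in>S. {v,u} \<notin> E}) \<le> d"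
    and WV: "W \<subseteq> V" and Wne: "W \<noteq> {}" and cardW: "real (card W) > 2*d"
    and col: "R \<union> B = {e\<in>E. \<not> e \<subseteq> W}"
    and hB: "\<forall>w\<in>W. real (card {u\<in>V-W. {w,u}\<in>B}) > 2*d"
  shows "\<exists>v\<in>V. real (card (component_of V R v)) \<ge> real (card V) - d
            \<or> real (card (component_of V B v)) \<ge> real (card V) - d"
proof -
  have red: "{z,y} \<in> R" if "conn_B_w_y" : "(\<lambda>x y. {x,y} \<in> B)\<^sup>*\<^sup>* w y"
    and nz: "\<not> (\<lambda>x y. {x,y} \<in> B)\<^sup>*\<^sup>* w z" and e: "{z,y} \<in> E" and nw: "y \<notin> W \<or> z \<notin> W"
  for w y z
  proof -
    have "{z,y} \<in> R \<union> B" using col e nw by auto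
    moreover have "{z,y} \<notin> B"
    proof
      assume "{z,y} \<in> B"
      then have "{y,z} \<in> B" by (simp add: insert_commute)
      then have "(\<lambda>x y. {x,y} \<in> B)\<^sup>*\<^sup>* y z" by (rule conn_edge)
      then show False using nz rtranclp_trans[OF that(1)] by blast
    qed
    ultimately show ?thesis by auto
  qed
  have d0: "0 \<le> d"
  proof -
    obtain w where "w \<in> W" using Wne by auto
    then have "real (card {u\<in>{}. {w,u} \<notin> E}) \<le> d" using WV by (intro nonnbr) auto
    then show ?thesis by simp
  qed
  show ?thesis
  proof (cases "\<forall>w1\<in>W. \<forall>w2\<in>W. (\<lambda>x y. {x,y} \<in> B)\<^sup>*\<^sup>* w1 w2")
    case True
    obtain w0 where w0: "w0 \<in> W" using Wne by auto
    define C where "C = component_of V B w0"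
    have WC: "W \<subseteq> C" using True w0 WV unfolding C_def component_of_def by auto
    have CV: "C \<subseteq> V" unfolding C_def component_of_def by auto
    have finC: "finite C" using CV fin finite_subset by auto
    have cardC: "real (card C) > 2*d"
    proof -
      have "card W \<le> card C" using WC finC by (rule card_mono[rotated])
      then show ?thesis using cardW by linarith
    qed
    show ?thesis
    proof (cases "V \<subseteq> C")
      case True
      then have "C = V" using CV by auto
      then have "real (card (component_of V B w0)) \<ge> real (card V) - d" using d0 unfolding C_def by simp
      then show ?thesis using w0 WV by blast
    next
      case False
      then obtain x0 where x0: "x0 \<in> V" "x0 \<notin> C" by auto
      have nx0: "\<not> (\<lambda>x y. {x,y} \<in> B)\<^sup>*\<^sup>* w0 x0" using x0 unfolding C_def component_of_def by auto
      have x0W: "x0 \<notin> W" using x0 WC by auto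
      define N where "N = {y\<in>C. {x0,y} \<notin> E}"
      have cardN: "real (card N) \<le> d" unfolding N_def using x0 CV by (intro nonnbr) auto
      define D where "D = component_of V R x0"
      have sub: "V - N \<subseteq> D"
      proof
        fix z assume z: "z \<in> V - N"
        show "z \<in> D"
        proof (cases "z \<in> C")
          case True
          then have e: "{x0,z} \<in> E" using z unfolding N_def by auto
          have cz: "(\<lambda>x y. {x,y} \<in> B)\<^sup>*\<^sup>* w0 z" using True unfolding C_def component_of_def by auto
          have "{x0,z} \<in> R" using red[OF cz nx0 e] x0W by auto
          then show ?thesis using z unfolding D_def component_of_def by (auto intro: conn_edge)
        next
          case False
          have nz: "\<not> (\<lambda>x y. {x,y} \<in> B)\<^sup>*\<^sup>* w0 z" using False z unfolding C_def component_of_def by auto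
          have zW: "z \<notin> W" using False WC by auto
          obtain y where y: "y \<in> C" "{x0,y} \<in> E" "{z,y} \<in> E"
            using common_nbr[OF finC, of x0 E d z] nonnbr[OF x0(1) CV x0(2)] nonnbr[of z C] z CV False cardC
            by auto
          have cy: "(\<lambda>x y. {x,y} \<in> B)\<^sup>*\<^sup>* w0 y" using y unfolding C_def component_of_def by auto
          have r1: "{x0,y} \<in> R" using red[OF cy nx0 y(2)] x0W by auto
          have r2: "{y,z} \<in> R" using red[OF cy nz y(3)] zW by (auto simp: insert_commute)
          have "(\<lambda>x y. {x,y} \<in> R)\<^sup>*\<^sup>* x0 z"
            by (rule rtranclp_trans[OF conn_edge[OF r1] conn_edge[OF r2]])
          then show ?thesis using z unfolding D_def component_of_def by auto
        qed
      qed
      have DV: "D \<subseteq> V" unfolding D_def component_of_def by auto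
      have "card V \<le> card ((V - N) \<union> N)" using fin finC by (intro card_mono) (auto simp: N_def)
      also have "\<dots> \<le> card (V - N) + card N" by (rule card_Un_le)
      also have "card (V - N) \<le> card D" using sub DV fin finite_subset by (intro card_mono) auto
      finally have "real (card V) \<le> real (card D) + real (card N)" by linarith
      then have "real (card (component_of V R x0)) \<ge> real (card V) - d" using cardN unfolding D_def by linarith
      then show ?thesis using x0 by blast
    qed
  next
    case False
    then obtain w1 w2 where w: "w1 \<in> W" "w2 \<in> W" "\<not> (\<lambda>x y. {x,y} \<in> B)\<^sup>*\<^sup>* w1 w2" by auto
    define B1 where "B1 = {u\<in>V-W. {w1,u}\<in>B}"
    define B2 where "B2 = {u\<in>V-W. {w2,u}\<in>B}"
    have B1V: "B1 \<subseteq> V" and B2V: "B2 \<subseteq> V" unfolding B1_def B2_def by auto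
    have finB1: "finite B1" and finB2: "finite B2" using B1V B2V fin finite_subset by auto
    have cB1: "real (card B1) > 2*d" using hB w unfolding B1_def by auto
    have cB2: "real (card B2) > 2*d" using hB w unfolding B2_def by auto
    have inB1: "(\<lambda>x y. {x,y} \<in> B)\<^sup>*\<^sup>* w1 u" if "u \<in> B1" for u
      using that unfolding B1_def by (auto intro: conn_edge)
    have inB2: "(\<lambda>x y. {x,y} \<in> B)\<^sup>*\<^sup>* w2 u" if "u \<in> B2" for u
      using that unfolding B2_def by (auto intro: conn_edge)
    have excl: "\<not> (\<lambda>x y. {x,y} \<in> B)\<^sup>*\<^sup>* w2 z" if "(\<lambda>x y. {x,y} \<in> B)\<^sup>*\<^sup>* w1 z" for z
    proof
      assume "(\<lambda>x y. {x,y} \<in> B)\<^sup>*\<^sup>* w2 z"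
      then have "(\<lambda>x y. {x,y} \<in> B)\<^sup>*\<^sup>* z w2" by (rule conn_sym)
      then show False using w(3) rtranclp_trans[OF that] by blast
    qed
    have "card B1 > 0" using cB1 d0 by linarith
    then obtain u1 where u1: "u1 \<in> B1" by (metis card_gt_0_iff ex_in_conv)
    have u1V: "u1 \<in> V" using u1 B1V by auto
    have a: "(\<lambda>x y. {x,y} \<in> R)\<^sup>*\<^sup>* u1 y" if y: "y \<in> B1" for y
    proof -
      have nu1: "\<not> (\<lambda>x y. {x,y} \<in> B)\<^sup>*\<^sup>* w2 u1" using excl inB1 u1 by blast
      have ny: "\<not> (\<lambda>x y. {x,y} \<in> B)\<^sup>*\<^sup>* w2 y" using excl inB1 y by blast
      have u1B2: "u1 \<notin> B2" using nu1 inB2 by blast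
      have yB2: "y \<notin> B2" using ny inB2 by blast
      have yV: "y \<in> V" using y B1V by auto
      obtain y' where y': "y' \<in> B2" "{u1,y'} \<in> E" "{y,y'} \<in> E"
        using common_nbr[OF finB2, of u1 E d y] nonnbr[OF u1V B2V u1B2] nonnbr[OF yV B2V yB2] cB2
        by auto
      have y'W: "y' \<notin> W" using y' unfolding B2_def by auto
      have r1: "{u1,y'} \<in> R" using red[OF inB2[OF y'(1)] nu1 y'(2)] y'W by auto
      have r2: "{y',y} \<in> R" using red[OF inB2[OF y'(1)] ny y'(3)] y'W by (auto simp: insert_commute)
      show ?thesis by (rule rtranclp_trans[OF conn_edge[OF r1] conn_edge[OF r2]])
    qed
    have b: "(\<lambda>x y. {x,y} \<in> R)\<^sup>*\<^sup>* u1 z" if z: "z \<in> V" "\<not> (\<lambda>x y. {x,y} \<in> B)\<^sup>*\<^sup>* w1 z" for z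
    proof -
      have zB1: "z \<notin> B1" using z inB1 by blast
      obtain y where y: "y \<in> B1" "{z,y} \<in> E"
        using exists_nbr[OF nonnbr[OF z(1) B1V zB1]] cB1 d0 by auto
      have yW: "y \<notin> W" using y unfolding B1_def by auto
      have r: "{y,z} \<in> R" using red[OF inB1[OF y(1)] z(2) y(2)] yW by (auto simp: insert_commute)
      show ?thesis by (rule rtranclp_trans[OF a[OF y(1)] conn_edge[OF r]])
    qed
    have c: "(\<lambda>x y. {x,y} \<in> R)\<^sup>*\<^sup>* u1 z" if z: "z \<in> V" "\<not> (\<lambda>x y. {x,y} \<in> B)\<^sup>*\<^sup>* w2 z" for z
    proof -
      have zB2: "z \<notin> B2" using z inB2 by blast
      obtain y where y: "y \<in> B2" "{z,y} \<in> E"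
        using exists_nbr[OF nonnbr[OF z(1) B2V zB2]] cB2 d0 by auto
      have yW: "y \<notin> W" using y unfolding B2_def by auto
      have yV: "y \<in> V" using y B2V by auto
      have r: "{y,z} \<in> R" using red[OF inB2[OF y(1)] z(2) y(2)] yW by (auto simp: insert_commute)
      have ny: "\<not> (\<lambda>x y. {x,y} \<in> B)\<^sup>*\<^sup>* w1 y" using excl inB2[OF y(1)] by blast
      show ?thesis by (rule rtranclp_trans[OF b[OF yV ny] conn_edge[OF r]])
    qed
    have all: "(\<lambda>x y. {x,y} \<in> R)\<^sup>*\<^sup>* u1 z" if "z \<in> V" for z
    proof (cases "(\<lambda>x y. {x,y} \<in> B)\<^sup>*\<^sup>* w1 z")
      case True
      then show ?thesis using c[OF that excl[OF True]] by simp
    next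
      case False
      then show ?thesis using b[OF that False] by simp
    qed
    have "component_of V R u1 = V"
      unfolding component_of_def using all by auto
    then have "real (card (component_of V R u1)) \<ge> real (card V) - d" using d0 by simp
    then show ?thesis using u1V by blast
  qed
qed

theorem lemma7p18:
  fixes V W :: "'a set" and E R B :: "'a set set" and eta :: real and K :: nat
    and F :: "'a set"
  assumes "0 < eta" and "eta < 1/20" and "real K \<ge> 1 / eta"
    and "simple_graph V E" and "card V = K"
    and "almost_complete eta V E"
    and "W \<subseteq> V"
    and "real (card W) \<ge> 4 * sqrt eta * real K"
    and "real (card (V - W)) \<ge> 4 * sqrt eta * real K"
    and "R \<union> B = {e \<in> E. \<not> e \<subseteq> W}" and "R \<inter> B = {}"
    and "mono_component V R B F"
    and "\<forall>S. mono_component V R B S \<longrightarrow> card S \<le> card F"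
  shows "real (card F) \<ge> (1 - 2 * sqrt eta) * real K
    \<or> ({w \<in> W. real (card {u \<in> V - W. {w, u} \<notin> R}) \<le> 3 * sqrt eta * real K} \<noteq> {}
       \<and> {w \<in> W. real (card {u \<in> V - W. {w, u} \<notin> B}) \<le> 3 * sqrt eta * real K} \<noteq> {})"
proof -
  define s where "s = sqrt eta"
  define d where "d = eta * (real K - 1)"
  have fin: "finite V" using assms(4) unfolding simple_graph_def by auto
  have Kpos: "real K > 0"
  proof -
    have "1 / eta > 0" using assms(1) by simp
    then show ?thesis using assms(3) by linarith
  qed
  have es: "eta \<le> s" unfolding s_def using assms(1,2)
    by (intro real_le_rsqrt) (simp add: power2_eq_square)
  have nonnbr: "real (card {u\<in>S. {v,u} \<notin> E}) \<le> d" if v: "v \<in> V" "S \<subseteq> V" "v \<notin> S" for v S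
  proof -
    define Nv where "Nv = {u \<in> V. {v, u} \<in> E}"
    have Nsub: "Nv \<subseteq> V - {v}"
    proof
      fix u assume "u \<in> Nv"
      then have "u \<in> V" "{v,u} \<in> E" unfolding Nv_def by auto
      moreover have "u \<noteq> v"
      proof
        assume "u = v"
        then have "card {v,u} = 1" by simp
        then show False using \<open>{v,u} \<in> E\<close> assms(4) unfolding simple_graph_def by auto
      qed
      ultimately show "u \<in> V - {v}" by auto
    qed
    have sub: "{u\<in>S. {v,u} \<notin> E} \<subseteq> (V - {v}) - Nv" using v unfolding Nv_def by auto
    have f1: "finite (V - {v})" using fin by auto
    have "card {u\<in>S. {v,u} \<notin> E} \<le> card ((V - {v}) - Nv)" using sub f1 by (intro card_mono) auto
    also have "\<dots> = card (V - {v}) - card Nv" using Nsub f1 finite_subset by (intro card_Diff_subset) auto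
    finally have c1: "card {u\<in>S. {v,u} \<notin> E} + card Nv \<le> card (V - {v})"
      using card_mono[OF f1 Nsub] by linarith
    have "card (V - {v}) = K - 1" using v(1) assms(5) fin by simp
    moreover have "real (card Nv) \<ge> (1 - eta) * (real K - 1)"
      using assms(6) v(1) assms(5) unfolding almost_complete_def degree_def Nv_def by auto
    moreover have "K \<ge> 1" using Kpos by simp
    ultimately have "real (card {u\<in>S. {v,u} \<notin> E}) + (1 - eta) * (real K - 1) \<le> real K - 1"
      using c1 by (simp add: of_nat_diff)
    then show ?thesis unfolding d_def by (simp add: algebra_simps)
  qed
  have WV: "W \<subseteq> V" by (rule assms(7))
  have cardW: "real (card W) > 2*d"
  proof -
    have "4 * s * real K \<ge> 4 * eta * real K" using es Kpos by simp
    moreover have "2 * d < 4 * eta * real K"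
    proof -
      have "eta * real K > 0" using assms(1) Kpos by simp
      then show ?thesis unfolding d_def right_diff_distrib using assms(1) by linarith
    qed
    ultimately show ?thesis using assms(8) unfolding s_def by linarith
  qed
  have Wne: "W \<noteq> {}"
  proof -
    have "K \<ge> 1" using Kpos by simp
    then have "real K - 1 \<ge> 0" by simp
    then have "d \<ge> 0" unfolding d_def using assms(1) by simp
    then show ?thesis using cardW by auto
  qed
  have final: "real (card F) \<ge> (1 - 2 * sqrt eta) * real K"
    if hyp: "\<forall>w\<in>W. real (card {u \<in> V - W. {w, u} \<notin> R'}) > 3 * sqrt eta * real K"
      and col: "R' \<union> B' = {e \<in> E. \<not> e \<subseteq> W}"
      and mc: "\<And>S. mono_component V R' B' S \<Longrightarrow> mono_component V R B S"
    for R' B'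
  proof -
    have hB: "\<forall>w\<in>W. real (card {u\<in>V-W. {w,u}\<in>B'}) > 2*d"
    proof
      fix w assume w: "w \<in> W"
      have "{u \<in> V - W. {w, u} \<notin> R'} \<subseteq> {u\<in>V-W. {w,u}\<in>B'} \<union> {u\<in>V-W. {w,u}\<notin>E}"
        using col by auto
      then have "card {u \<in> V - W. {w, u} \<notin> R'} \<le> card ({u\<in>V-W. {w,u}\<in>B'} \<union> {u\<in>V-W. {w,u}\<notin>E})"
        using fin by (intro card_mono) auto
      also have "\<dots> \<le> card {u\<in>V-W. {w,u}\<in>B'} + card {u\<in>V-W. {w,u}\<notin>E}" by (rule card_Un_le)
      finally have "real (card {u \<in> V - W. {w, u} \<notin> R'}) \<le> real (card {u\<in>V-W. {w,u}\<in>B'}) + real (card {u\<in>V-W. {w,u}\<notin>E})"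
        by linarith
      moreover have "real (card {u\<in>V-W. {w,u}\<notin>E}) \<le> d" using w WV by (intro nonnbr) auto
      moreover have "3 * d \<le> 3 * s * real K"
      proof -
        have "d \<le> eta * real K" unfolding d_def using assms(1) by simp
        also have "\<dots> \<le> s * real K" using es Kpos by simp
        finally show ?thesis by simp
      qed
      moreover have "real (card {u \<in> V - W. {w, u} \<notin> R'}) > 3 * s * real K" using hyp w unfolding s_def by blast
      ultimately show "real (card {u\<in>V-W. {w,u}\<in>B'}) > 2*d" by linarith
    qed
    obtain v where v: "v \<in> V" "real (card (component_of V R' v)) \<ge> real (card V) - d
            \<or> real (card (component_of V B' v)) \<ge> real (card V) - d"
      using main[OF fin nonnbr WV Wne cardW col hB] by blast
    then obtain S where S: "mono_component V R' B' S" "real (card S) \<ge> real K - d"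
      unfolding mono_component_def is_component_def using assms(5) by blast
    have "card S \<le> card F" using assms(13) mc[OF S(1)] by blast
    moreover have "real K - d \<ge> (1 - 2 * sqrt eta) * real K"
    proof -
      have "d \<le> eta * real K" unfolding d_def using assms(1) by simp
      also have "\<dots> \<le> 2 * s * real K" using es Kpos assms(1) by simp
      finally show ?thesis unfolding s_def by (simp add: algebra_simps)
    qed
    ultimately show ?thesis using S(2) by linarith
  qed
  show ?thesis
  proof (cases "{w \<in> W. real (card {u \<in> V - W. {w, u} \<notin> R}) \<le> 3 * sqrt eta * real K} = {}")
    case True
    then have h: "\<forall>w\<in>W. real (card {u \<in> V - W. {w, u} \<notin> R}) > 3 * sqrt eta * real K"
      by (auto simp: not_le)
    have "real (card F) \<ge> (1 - 2 * sqrt eta) * real K"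
      by (rule final[OF h assms(10)])
    then show ?thesis by simp
  next
    case F1: False
    show ?thesis
    proof (cases "{w \<in> W. real (card {u \<in> V - W. {w, u} \<notin> B}) \<le> 3 * sqrt eta * real K} = {}")
      case True
      have "real (card F) \<ge> (1 - 2 * sqrt eta) * real K"
      proof (rule final[of B R])
        show "\<forall>w\<in>W. real (card {u \<in> V - W. {w, u} \<notin> B}) > 3 * sqrt eta * real K"
          using True by (auto simp: not_le)
        show "B \<union> R = {e \<in> E. \<not> e \<subseteq> W}" using assms(10) by blast
        show "mono_component V R B S" if "mono_component V B R S" for S
          using that unfolding mono_component_def by blast
      qed
      then show ?thesis by simp
    next
      case False
      then show ?thesis using F1 by simp
    qed
  qed
qed

end
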